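(* Let $p,q\in\mathbb Z$, $2\le n\le\infty$, $r\ge0$ and let $A$ be an $n$-multicomplex. Let $\phi_r\colon C_r\otimes A\to A$ be the morphism $\varepsilon\otimes 1_A$ (followed by the identification $R^{0,0}\otimes A\cong A$). Then $ZW_k^{p,q}(\phi_r)\colon ZW_k^{p,q}(C_r\otimes A)\to ZW_k^{p,q}(A)$ is surjective for every $0\le k\le r$.
   Context: Throughout, $R$ is a commutative unital ring. For $1\le n\le\infty$, an $n$-multicomplex is a $\mathbb Z\times\mathbb Z$-bigraded $R$-module $A=\{A^{p,q}\}$ with $R$-linear maps $d_i\colon A\to A$ ($i\ge0$) of bidegree $(-i,1-i)$ such that $\sum_{i+j=l}(-1)^id_id_j=0$ for all $l\ge0$, and $d_i=0$ for all $i\ge n$. A $2$-multicomplex is a bicomplex; any $n$-multicomplex is regarded as an $l$-multicomplex for $l\ge n$. Tensor product: $(A\otimes B)^{p,q}=\bigoplus_{p_1+p_2=p,\,q_1+q_2=q}A^{p_1,q_1}\otimes_RB^{p_2,q_2}$ with $d_i(a\otimes b)=d_ia\otimes b+(-1)^{\langle(-i,1-i),(a_1,a_2)\rangle}a\otimes d_ib$ for $a$ of bidegree $(a_1,a_2)$, where $\langle(x_1,x_2),(y_1,y_2)\rangle=x_1y_1+x_2y_2$. $C_r$ is the bicomplex $\mathcal ZW^2_r(0,0)$: for $r=0$ it is the free bicomplex on one generator $a_0$ in bidegree $(0,0)$ (free $R$-module on $a_0,d_0a_0,d_1a_0,d_0d_1a_0$); for $r\ge1$ it is the free $R$-module with basis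 $\beta_{-k,-k}$, $\beta_{-k-1,-k}$ ($0\le k\le r-1$; $\beta_{u,v}$ in bidegree $(u,v)$), with $d_1\beta_{-k,-k}=\beta_{-k-1,-k}$ for $0\le k\le r-1$, $d_0\beta_{-k,-k}=\beta_{-k,-k+1}$ for $1\le k\le r-1$, and all other structure maps zero. $\varepsilon\colon C_r\to R^{0,0}$ (where $R^{0,0}$ is $R$ in bidegree $(0,0)$ with zero structure maps) is the bicomplex morphism sending $a_0$ (resp. $\beta_{0,0}$ when $r\ge1$) to $1$ and all other basis elements to $0$. Witness cycles: $ZW_0^{p,q}(A)=A^{p,q}$; for $k\ge1$, $ZW_k^{p,q}(A)$ is the $R$-module of tuples $(a_0,\dots,a_{k-1})$ with $a_i\in A^{p-i,q-i}$ and $\sum_{i+j=l}(-1)^id_ia_j=0$ for $0\le l\le k-1$; a morphism $f$ induces $ZW_k(f)(a_0,\dots,a_{k-1})=(f(a_0),\dots,f(a_{k-1}))$. *)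

theory Defs
  imports Main "HOL-Library.Function_Algebras" "HOL-Library.Extended_Nat"
begin

(* Representation of a bigraded R-module with structure maps:
   a family of submodules  Car p q  of an ambient R-module  'a  (scalar mult. scale),
   and maps  d i p q : Car p q -> Car (p-i) (q+1-i)  (the component of d_i on A^{p,q}). *)

definition sgnpow :: "nat \<Rightarrow> 'a::ab_group_add \<Rightarrow> 'a" where
  "sgnpow i x = (if even i then x else - x)"

definition isgn :: "int \<Rightarrow> 'a::ab_group_add \<Rightarrow> 'a" where
  "isgn e x = (if even e then x else - x)"

definition multicomplex ::
  "enat \<Rightarrow> ('r::comm_ring_1 \<Rightarrow> 'a::ab_group_add \<Rightarrow> 'a) \<Rightarrow> (int \<Rightarrow> int \<Rightarrow> 'a set)
     \<Rightarrow> (nat \<Rightarrow> int \<Rightarrow> int \<Rightarrow> 'a \<Rightarrow> 'a) \<Rightarrow> bool" where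
  "multicomplex n scale Car d \<longleftrightarrow>
     module scale
   \<and> (\<forall>p q. module.subspace scale (Car p q))
   \<and> (\<forall>i p q. \<forall>x\<in>Car p q. d i p q x \<in> Car (p - int i) (q + 1 - int i))
   \<and> (\<forall>i p q. \<forall>x\<in>Car p q. \<forall>y\<in>Car p q. d i p q (x + y) = d i p q x + d i p q y)
   \<and> (\<forall>i p q c. \<forall>x\<in>Car p q. d i p q (scale c x) = scale c (d i p q x))
   \<and> (\<forall>l p q. \<forall>x\<in>Car p q.
        (\<Sum>i\<le>l. sgnpow i (d i (p - int (l - i)) (q + 1 - int (l - i)) (d (l - i) p q x))) = 0)
   \<and> (\<forall>i p q. n \<le> enat i \<longrightarrow> (\<forall>x\<in>Car p q. d i p q x = 0))"

(* Witness cycles ZW_k^{p,q}; tuples (a_0,...,a_{k-1}) are lists of length k.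
   ZW_0^{p,q} = A^{p,q} is encoded as singleton lists [a], a \<in> A^{p,q}. *)
definition ZW :: "(int \<Rightarrow> int \<Rightarrow> 'a set) \<Rightarrow> (nat \<Rightarrow> int \<Rightarrow> int \<Rightarrow> 'a \<Rightarrow> 'a)
                    \<Rightarrow> nat \<Rightarrow> int \<Rightarrow> int \<Rightarrow> 'a::ab_group_add list set" where
  "ZW Car d k p q =
    (if k = 0 then {[a] | a. a \<in> Car p q}
     else {as. length as = k
             \<and> (\<forall>i<k. as ! i \<in> Car (p - int i) (q - int i))
             \<and> (\<forall>l<k. (\<Sum>i\<le>l. sgnpow i (d i (p - int (l - i)) (q - int (l - i)) (as ! (l - i)))) = 0)})"

(* The bicomplex C_r = ZW^2_r(0,0): a free R-module on a finite basis; every basis element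
   has a distinct bidegree, so basis elements are labelled by their bidegree (u,v).
   r = 0: a_0 ~ (0,0), d_0 a_0 ~ (0,1), d_1 a_0 ~ (-1,0), d_0 d_1 a_0 = d_1 d_0 a_0 ~ (-1,1).
   r >= 1: beta_{-k,-k} ~ (-k,-k), beta_{-k-1,-k} ~ (-k-1,-k), 0 <= k <= r-1. *)
definition Cbasis :: "nat \<Rightarrow> (int \<times> int) set" where
  "Cbasis r = (if r = 0 then {(0,0), (0,1), (-1,0), (-1,1)}
               else {(- int k, - int k) | k. k < r} \<union> {(- int k - 1, - int k) | k. k < r})"

(* structure maps of C_r on basis elements: d_i b = c (coefficient 1) or d_i b = 0 (None) *)
definition Cd :: "nat \<Rightarrow> nat \<Rightarrow> int \<times> int \<Rightarrow> (int \<times> int) option" where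
  "Cd r i b =
    (if r = 0 then
       (if i = 0 \<and> b = (0,0) then Some (0,1)
        else if i = 0 \<and> b = (-1,0) then Some (-1,1)
        else if i = 1 \<and> b = (0,0) then Some (-1,0)
        else if i = 1 \<and> b = (0,1) then Some (-1,1)
        else None)
     else
       (if i = 1 \<and> (\<exists>k<r. b = (- int k, - int k)) then Some (fst b - 1, snd b)
        else if i = 0 \<and> (\<exists>k. 1 \<le> k \<and> k < r \<and> b = (- int k, - int k)) then Some (fst b, snd b + 1)
        else None))"

(* Tensor product C_r \<otimes> A: since C_r is free on Cbasis r,
   (C_r \<otimes> A)^{p,q} = \<Oplus>_{b} b \<otimes> A^{p-b_1,q-b_2}; an element is a function f with
   f b \<in> A^{p-b_1,q-b_2} (the coefficient of b), supported on the basis. *)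
definition TCar :: "nat \<Rightarrow> (int \<Rightarrow> int \<Rightarrow> 'a::ab_group_add set) \<Rightarrow> int \<Rightarrow> int \<Rightarrow> (int \<times> int \<Rightarrow> 'a) set" where
  "TCar r Car p q = {f. (\<forall>b\<in>Cbasis r. f b \<in> Car (p - fst b) (q - snd b))
                        \<and> (\<forall>b. b \<notin> Cbasis r \<longrightarrow> f b = 0)}"

(* d_i (b \<otimes> a) = d_i b \<otimes> a + (-1)^<(-i,1-i),deg b> b \<otimes> d_i a *)
definition Td :: "nat \<Rightarrow> (nat \<Rightarrow> int \<Rightarrow> int \<Rightarrow> 'a \<Rightarrow> 'a) \<Rightarrow> nat \<Rightarrow> int \<Rightarrow> int
                    \<Rightarrow> (int \<times> int \<Rightarrow> 'a::ab_group_add) \<Rightarrow> (int \<times> int \<Rightarrow> 'a)" where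
  "Td r d i p q f = (\<lambda>c. if c \<in> Cbasis r then
        (\<Sum>b\<in>{b\<in>Cbasis r. Cd r i b = Some c}. f b)
        + isgn ((- int i) * fst c + (1 - int i) * snd c) (d i (p - fst c) (q - snd c) (f c))
      else 0)"

(* phi_r = (epsilon \<otimes> 1_A) followed by R^{0,0} \<otimes> A \<cong> A: keeps the coefficient of the
   generator (a_0, resp. beta_{0,0}), whose label is (0,0). *)
definition phi :: "(int \<times> int \<Rightarrow> 'a) \<Rightarrow> 'a" where
  "phi f = f (0,0)"

end

theory Submission imports Defs begin

lemma sum_fun_apply: "(\<Sum>i\<in>S. f i) x = (\<Sum>i\<in>S. f i x)"
  by (induction S rule: infinite_finite_induct) auto

lemma sgnpow_apply: "sgnpow i f x = sgnpow i (f x)" by (simp add: sgnpow_def)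
lemma sgnpow_0[simp]: "sgnpow i (0::'a::ab_group_add) = 0" by (simp add: sgnpow_def)
lemma isgn_0[simp]: "isgn e (0::'a::ab_group_add) = 0" by (simp add: isgn_def)
lemma sgnpow_add: "sgnpow i (x + y::'a::ab_group_add) = sgnpow i x + sgnpow i y" by (simp add: sgnpow_def)
lemma sgnpow_isgn: "sgnpow i (isgn e (x::'a::ab_group_add)) = isgn e (sgnpow i x)" by (simp add: sgnpow_def isgn_def)
lemma sum_isgn: "(\<Sum>i\<in>S. isgn e (f i::'a::ab_group_add)) = isgn e (\<Sum>i\<in>S. f i)"
  by (simp add: isgn_def sum_negf)

lemma Cd_diag: "r > 0 \<Longrightarrow> {b\<in>Cbasis r. Cd r i b = Some (- int m, - int m)} = {}"
  by (auto simp: Cd_def Cbasis_def)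

lemma Cd_off: "r > 0 \<Longrightarrow> m < r \<Longrightarrow> {b\<in>Cbasis r. Cd r i b = Some (- int m - 1, - int m)} =
   (if i = 1 then {(- int m, - int m)} else if i = 0 \<and> m + 1 < r then {(- int m - 1, - int m - 1)} else {})"
  apply (auto simp: Cd_def Cbasis_def)
  done


theorem mainTheorem6:
  fixes scale :: "'r::comm_ring_1 \<Rightarrow> 'a::ab_group_add \<Rightarrow> 'a"
    and A :: "int \<Rightarrow> int \<Rightarrow> 'a set"
    and d :: "nat \<Rightarrow> int \<Rightarrow> int \<Rightarrow> 'a \<Rightarrow> 'a"
    and n :: enat and r k :: nat and p q :: int
  assumes "2 \<le> n"
    and mc: "multicomplex n scale A d"
    and kr: "k \<le> r"
  shows "ZW A d k p q \<subseteq> map phi ` ZW (TCar r A) (Td r d) k p q"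
proof
  fix as assume as: "as \<in> ZW A d k p q"
  have md: "module scale" and sub: "\<And>P Q. module.subspace scale (A P Q)"
    and dadd: "\<And>i P Q x y. x \<in> A P Q \<Longrightarrow> y \<in> A P Q \<Longrightarrow> d i P Q (x + y) = d i P Q x + d i P Q y"
    using mc unfolding multicomplex_def by auto
  have zA: "\<And>P Q. 0 \<in> A P Q" using module.subspace_0[OF md sub] .
  have d0[simp]: "\<And>i P Q. d i P Q 0 = 0"
  proof -
    fix i P Q
    have "d i P Q (0 + 0) = d i P Q 0 + d i P Q 0" using dadd zA by blast
    then show "d i P Q 0 = 0" by simp
  qed
  show "as \<in> map phi ` ZW (TCar r A) (Td r d) k p q"
  proof (cases "k = 0")
    case True
    then obtain a where a: "as = [a]" "a \<in> A p q" using as by (auto simp: ZW_def)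
    define f :: "int \<times> int \<Rightarrow> 'a" where "f = (\<lambda>c. if c = (0,0) then a else 0)"
    have "(0,0) \<in> Cbasis r" by (auto simp: Cbasis_def)
    then have "f \<in> TCar r A p q" using a zA by (auto simp: TCar_def f_def)
    then have "[f] \<in> ZW (TCar r A) (Td r d) k p q" using True by (auto simp: ZW_def)
    moreover have "as = map phi [f]" using a by (simp add: phi_def f_def)
    ultimately show ?thesis by blast
  next
    case False
    have len: "length as = k" and asA: "\<And>i. i < k \<Longrightarrow> as ! i \<in> A (p - int i) (q - int i)"
      and asZ: "\<And>l. l < k \<Longrightarrow> (\<Sum>i\<le>l. sgnpow i (d i (p - int (l - i)) (q - int (l - i)) (as ! (l - i)))) = 0"
      using as False by (auto simp: ZW_def)
    have r0: "r > 0" using False kr by simp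
    define X :: "nat \<Rightarrow> int \<times> int \<Rightarrow> 'a" where
      "X j = (\<lambda>(u,v). if u = v \<and> u \<le> 0 \<and> nat (- u) \<le> j then as ! (j - nat (- u)) else 0)" for j
    define xs where "xs = map X [0..<k]"
    have "map phi xs = as"
      by (rule nth_equalityI) (auto simp: xs_def len phi_def X_def)
    moreover have "xs \<in> ZW (TCar r A) (Td r d) k p q"
    proof -
      have T: "X j \<in> TCar r A (p - int j) (q - int j)" if "j < k" for j
      proof -
        have "X j b \<in> A (p - int j - fst b) (q - int j - snd b)" for b
        proof (cases b)
          case (Pair u v)
          show ?thesis
          proof (cases "u = v \<and> u \<le> 0 \<and> nat (- u) \<le> j")
            case True
            then have "X j b = as ! (j - nat (-u))" by (auto simp: X_def Pair)
            moreover have "as ! (j - nat (-u)) \<in> A (p - int (j - nat (-u))) (q - int (j - nat (-u)))"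
              using asA that by simp
            moreover have "p - int j - fst b = p - int (j - nat (-u))" "q - int j - snd b = q - int (j - nat (-u))"
              using True Pair by auto
            ultimately show ?thesis by metis
          next
            case False
            then have "X j b = 0" by (auto simp: X_def Pair)
            then show ?thesis using zA by simp
          qed
        qed
        moreover have "X j b = 0" if "b \<notin> Cbasis r" for b
        proof (cases b)
          case (Pair u v)
          show ?thesis
          proof (rule ccontr)
            assume "X j b \<noteq> 0"
            then have h: "u = v" "u \<le> 0" "nat (-u) \<le> j" by (auto simp: X_def Pair split: if_splits)
            then have "b = (- int (nat (-u)), - int (nat (-u)))" "nat (-u) < r" using Pair \<open>j < k\<close> kr by auto
            then have "b \<in> Cbasis r" using r0 unfolding Cbasis_def by auto
            then show False using that by simp
          qed
        qed
        ultimately show ?thesis by (auto simp: TCar_def)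
      qed
      have Z: "(\<Sum>i\<le>l. sgnpow i (Td r d i (p - int (l - i)) (q - int (l - i)) (X (l - i)))) = 0"
        if lk: "l < k" for l
      proof
        fix c
        show "(\<Sum>i\<le>l. sgnpow i (Td r d i (p - int (l - i)) (q - int (l - i)) (X (l - i)))) c = 0 c"
        proof (cases "c \<in> Cbasis r")
          case False
          then show ?thesis by (simp add: sum_fun_apply sgnpow_apply Td_def)
        next
          case True
          then obtain m where m: "m < r" "c = (- int m, - int m) \<or> c = (- int m - 1, - int m)"
            using r0 unfolding Cbasis_def by auto
          from m(2) show ?thesis
          proof
            assume c: "c = (- int m, - int m)"
            have ex: "(- int i * - int m + (1 - int i) * - int m) = 2 * (int i * int m) - int m" for i
              by algebra
            have isg: "isgn (- int i * - int m + (1 - int i) * - int m) x = isgn (int m) x" for i and x :: 'a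
              unfolding isgn_def ex by simp
            have isg2: "isgn (int i * int m - (1 - int i) * int m) x = isgn (int m) x" for i and x :: 'a
              using isg[of i x] by (simp add: algebra_simps)
            define D where "D i = d i (p - int (l - m - i)) (q - int (l - m - i)) (as ! (l - m - i))" for i
            have eq: "Td r d i (p - int (l-i)) (q - int (l-i)) (X (l-i)) c
                = isgn (int m) (if m \<le> l \<and> i \<le> l - m then D i else 0)" if "i \<le> l" for i
            proof -
              have "Td r d i (p - int (l-i)) (q - int (l-i)) (X (l-i)) c
                 = isgn (int m) (d i (p - int (l - i) + int m) (q - int (l - i) + int m) (X (l-i) (- int m, - int m)))"
                using True unfolding Td_def c Cd_diag[OF r0] by (simp add: isg2)
              also have "\<dots> = isgn (int m) (if m \<le> l \<and> i \<le> l - m then D i else 0)"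
              proof (cases "m \<le> l \<and> i \<le> l - m")
                case True
                then have "p - int (l - i) + int m = p - int (l - m - i)" "q - int (l - i) + int m = q - int (l - m - i)"
                  "l - i - m = l - m - i" using that by auto
                then show ?thesis using True that by (auto simp: X_def D_def algebra_simps)
              next
                case False
                then have "\<not> m \<le> l - i" using that by auto
                then show ?thesis using False by (auto simp: X_def)
              qed
              finally show ?thesis .
            qed
            have "(\<Sum>i\<le>l. sgnpow i (Td r d i (p - int (l - i)) (q - int (l - i)) (X (l - i)))) c
                = (\<Sum>i\<le>l. isgn (int m) (sgnpow i (if m \<le> l \<and> i \<le> l - m then D i else 0)))"
              unfolding sum_fun_apply sgnpow_apply by (intro sum.cong refl, subst eq) (auto simp: sgnpow_isgn)
            also have "\<dots> = isgn (int m) (\<Sum>i\<le>l. sgnpow i (if m \<le> l \<and> i \<le> l - m then D i else 0))"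
              by (rule sum_isgn)
            also have "(\<Sum>i\<le>l. sgnpow i (if m \<le> l \<and> i \<le> l - m then D i else 0)) = 0"
            proof (cases "m \<le> l")
              case True
              have "(\<Sum>i\<le>l. sgnpow i (if m \<le> l \<and> i \<le> l - m then D i else 0)) = (\<Sum>i\<le>l - m. sgnpow i (D i))"
                by (rule sum.mono_neutral_cong_right) (use True in auto)
              also have "\<dots> = 0" using asZ[of "l - m"] lk unfolding D_def by simp
              finally show ?thesis .
            qed simp
            finally show ?thesis by simp
          next
            assume c: "c = (- int m - 1, - int m)"
            have Xc: "X j c = 0" for j by (simp add: X_def c)
            define g where "g i = sgnpow i (if i = 1 then X (l - 1) (- int m, - int m)
                 else if i = 0 \<and> m + 1 < r then X l (- int m - 1, - int m - 1) else 0)" for i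
            have eq: "sgnpow i (Td r d i (p - int (l-i)) (q - int (l-i)) (X (l-i)) c) = g i" if "i \<le> l" for i
              using True unfolding Td_def c Cd_off[OF r0 m(1)] g_def
              by (simp add: Xc[unfolded c])
            have "(\<Sum>i\<le>l. sgnpow i (Td r d i (p - int (l - i)) (q - int (l - i)) (X (l - i)))) c
                = (\<Sum>i\<le>l. g i)"
              unfolding sum_fun_apply sgnpow_apply by (intro sum.cong refl, subst eq[unfolded sgnpow_apply]) auto
            also have "\<dots> = 0"
            proof (cases l)
              case 0
              then show ?thesis by (simp add: g_def X_def)
            next
              case (Suc l')
              have "(\<Sum>i\<le>l. g i) = (\<Sum>i\<in>{0,1}. g i)"
                by (rule sum.mono_neutral_right) (auto simp: Suc g_def)
              also have "\<dots> = g 0 + g 1" by simp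
              also have "\<dots> = 0"
              proof (cases "m + 1 \<le> l")
                case True
                then have "m + 1 < r" using lk kr by simp
                moreover have "nat (1 + int m) = m + 1" by simp
                ultimately show ?thesis using True by (simp add: g_def X_def sgnpow_def Suc)
              next
                case False
                moreover have "nat (1 + int m) = m + 1" by simp
                ultimately show ?thesis by (simp add: g_def X_def sgnpow_def Suc)
              qed
              finally show ?thesis .
            qed
            finally show ?thesis by simp
          qed
        qed
      qed
      show ?thesis using T Z by (auto simp: ZW_def xs_def False)
    qed
    ultimately show ?thesis by blast
  qed
qed

end
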